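(* Let $\nu\ge 0$ and $\alpha>-1$, and let $(P_n)_{n\in\mathbb{N}_0}$ be a sequence of real polynomials. The orthogonality conditions $$\int_0^\infty P_n(x)P_m(x)\,x^\alpha\rho_\nu(x)\,dx=\delta_{n,m},\qquad n,m\in\mathbb{N}_0,$$ hold if and only if the composition orthogonality conditions (composition orthogonality in the sense of Laguerre) $$\int_0^\infty t^\nu e^{-t}\,P_m(\theta)P_n(\theta)\{t^\alpha\}\,dt=\frac{\delta_{m,n}}{\Gamma(1+\alpha)},\qquad m,n\in\mathbb{N}_0,$$ hold. In other words, Prudnikov's orthogonal polynomials are exactly the polynomials that are compositionally orthogonal in the sense of Laguerre.
   Context: For $\nu\in\mathbb{R}$ and $x>0$, $\rho_\nu(x)=2x^{\nu/2}K_\nu(2\sqrt{x})$, where $K_\nu$ is the modified Bessel function of the second kind; equivalently $\rho_\nu(x)=\int_0^\infty t^{\nu-1}e^{-t-x/t}\,dt$. The differential operator $\theta$ is defined by $\theta=tDt$, i.e. $(\theta f)(t)=t\frac{d}{dt}\big(tf(t)\big)$. For a polynomial $P(x)=\sum_k p_kx^k$, $P(\theta)$ denotes the operator $\sum_k p_k\theta^k$, and $P_m(\theta)P_n(\theta)$ denotes the composition of these operators. Note that $\theta^j\{t^\alpha\}=(1+\alpha)_j\,t^{\alpha+j}$. Here $\delta_{n,m}$ is the Kronecker delta. *)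

theory Defs
  imports "HOL-Analysis.Analysis" "HOL-Computational_Algebra.Polynomial"
begin

text \<open>rho_nu(x) = integral over (0,inf) of t^(nu-1) e^(-t-x/t) dt (= 2 x^(nu/2) K_nu(2 sqrt x)).\<close>
definition rho :: "real \<Rightarrow> real \<Rightarrow> real" where
  "rho \<nu> x = (LBINT t:{0<..}. t powr (\<nu> - 1) * exp (- t - x / t))"

definition theta :: "(real \<Rightarrow> real) \<Rightarrow> real \<Rightarrow> real" where
  "theta f = (\<lambda>t. t * deriv (\<lambda>s. s * f s) t)"

definition poly_theta :: "real poly \<Rightarrow> (real \<Rightarrow> real) \<Rightarrow> real \<Rightarrow> real" where
  "poly_theta p f = (\<lambda>t. \<Sum>k\<le>degree p. coeff p k * (theta ^^ k) f t)"

end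

theory Submission
  imports Defs
begin
lemma theta_step:
  fixes K :: "'a set" and f :: "real \<Rightarrow> real" and c b :: "'a \<Rightarrow> real" and t :: real
  assumes fin: "finite K" and h: "\<And>s. s > 0 \<Longrightarrow> f s = (\<Sum>k\<in>K. c k * s powr b k)"
    and t: "t > 0"
  shows "theta f t = (\<Sum>k\<in>K. c k * (b k + 1) * t powr (b k + 1))"
proof -
  have ev: "eventually (\<lambda>s. s * f s = (\<Sum>k\<in>K. c k * s powr (b k + 1))) (nhds t)"
  proof -
    have "eventually (\<lambda>s. s \<in> {0<..}) (nhds t)"
      using t by (intro eventually_nhds_in_open) auto
    then show ?thesis
    proof (rule eventually_mono)
      fix s :: real assume "s \<in> {0<..}"
      then have s: "s > 0" by simp
      have "s * f s = (\<Sum>k\<in>K. c k * (s * s powr b k))"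
        using h[OF s] by (simp add: sum_distrib_left, intro sum.cong, simp_all add: mult.commute)
      also have "\<dots> = (\<Sum>k\<in>K. c k * s powr (b k + 1))"
        using s by (simp add: powr_add mult.commute)
      finally show "s * f s = (\<Sum>k\<in>K. c k * s powr (b k + 1))" .
    qed
  qed
  have "deriv (\<lambda>s. s * f s) t = deriv (\<lambda>s. \<Sum>k\<in>K. c k * s powr (b k + 1)) t"
    by (rule deriv_cong_ev[OF ev refl])
  also have "\<dots> = (\<Sum>k\<in>K. c k * ((b k + 1) * t powr (b k + 1 - 1)))"
  proof (rule DERIV_imp_deriv)
    show "((\<lambda>s. \<Sum>k\<in>K. c k * s powr (b k + 1)) has_real_derivative
        (\<Sum>k\<in>K. c k * ((b k + 1) * t powr (b k + 1 - 1)))) (at t)"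
      by (intro DERIV_sum DERIV_cmult has_real_derivative_powr t)
  qed
  finally have d: "deriv (\<lambda>s. s * f s) t = (\<Sum>k\<in>K. c k * ((b k + 1) * t powr b k))" by simp
  have "theta f t = (\<Sum>k\<in>K. c k * (b k + 1) * (t * t powr b k))"
    unfolding theta_def d by (simp add: sum_distrib_left algebra_simps)
  also have "\<dots> = (\<Sum>k\<in>K. c k * (b k + 1) * t powr (b k + 1))"
    using t by (simp add: powr_add mult.commute)
  finally show ?thesis .
qed

lemma theta_pow:
  fixes K :: "'a set" and f :: "real \<Rightarrow> real" and c b :: "'a \<Rightarrow> real" and t :: real
  assumes fin: "finite K" and h: "\<And>s. s > 0 \<Longrightarrow> f s = (\<Sum>k\<in>K. c k * s powr b k)"
  shows "t > 0 \<Longrightarrow> (theta ^^ j) f t = (\<Sum>k\<in>K. c k * pochhammer (b k + 1) j * t powr (b k + j))"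
proof (induction j arbitrary: t)
  case 0
  then show ?case using h by simp
next
  case (Suc j)
  have "(theta ^^ Suc j) f t = theta ((theta ^^ j) f) t" by simp
  also have "\<dots> = (\<Sum>k\<in>K. (c k * pochhammer (b k + 1) j) * ((b k + j) + 1) * t powr ((b k + j) + 1))"
    by (rule theta_step[OF fin _ Suc.prems]) (use Suc.IH in simp)
  also have "\<dots> = (\<Sum>k\<in>K. c k * pochhammer (b k + 1) (Suc j) * t powr (b k + Suc j))"
    by (intro sum.cong refl) (simp add: pochhammer_Suc algebra_simps)
  finally show ?case .
qed

lemma poly_theta_sum:
  fixes K :: "'a set" and f :: "real \<Rightarrow> real" and c b :: "'a \<Rightarrow> real" and t :: real
  assumes fin: "finite K" and h: "\<And>s. s > 0 \<Longrightarrow> f s = (\<Sum>k\<in>K. c k * s powr b k)"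
    and t: "t > 0"
  shows "poly_theta p f t = (\<Sum>j\<le>degree p. coeff p j * (\<Sum>k\<in>K. c k * pochhammer (b k + 1) j * t powr (b k + j)))"
  unfolding poly_theta_def using theta_pow[OF fin h t] by simp

lemma gamma_nn:
  fixes e :: real assumes "e > -1"
  shows "(\<integral>\<^sup>+t. ennreal (indicator {0<..} t * (t powr e * exp (- t))) \<partial>lborel) = ennreal (Gamma (e + 1))"
proof -
  have "Gamma (e + 1) = (\<integral>\<^sup>+t. ennreal (indicator {0..} t * t powr (e + 1 - 1) / exp t) \<partial>lborel)"
    by (rule Gamma_conv_nn_integral_real) (use assms in simp)
  also have "\<dots> = (\<integral>\<^sup>+t. ennreal (indicator {0<..} t * (t powr e * exp (- t))) \<partial>lborel)"
    by (intro nn_integral_cong) (auto simp: indicator_def exp_minus field_simps)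
  finally show ?thesis by simp
qed

lemma gamma_hbi:
  fixes e :: real assumes "e > -1"
  shows "has_bochner_integral lborel (\<lambda>t. indicator {0<..} t * (t powr e * exp (- t))) (Gamma (e + 1))"
  by (rule has_bochner_integral_nn_integral) (use assms gamma_nn[OF assms] in auto)

lemma scaled_nn:
  fixes a t :: real assumes a: "a > -1" and t: "t > 0"
  shows "(\<integral>\<^sup>+x. ennreal (indicator {0<..} x * (x powr a * exp (- (x / t)))) \<partial>lborel)
       = ennreal (t powr (a + 1) * Gamma (a + 1))"
proof -
  have "(\<integral>\<^sup>+x. ennreal (indicator {0<..} x * (x powr a * exp (- (x / t)))) \<partial>lborel)
      = \<bar>t\<bar> * (\<integral>\<^sup>+u. ennreal (indicator {0<..} (0 + t * u) * ((0 + t * u) powr a * exp (- ((0 + t * u) / t)))) \<partial>lborel)"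
    by (rule nn_integral_real_affine) (use t in auto)
  also have "\<dots> = ennreal t * (\<integral>\<^sup>+u. ennreal (t powr a) * ennreal (indicator {0<..} u * (u powr a * exp (- u))) \<partial>lborel)"
  proof -
    have "ennreal (indicator {0<..} (0 + t * u) * ((0 + t * u) powr a * exp (- ((0 + t * u) / t))))
        = ennreal (t powr a) * ennreal (indicator {0<..} u * (u powr a * exp (- u)))" for u
    proof (cases "u > 0")
      case True
      then show ?thesis using t
        by (simp add: ennreal_mult[symmetric] powr_mult indicator_def zero_less_mult_iff)
    next
      case False
      then have "\<not> t * u > 0" using t by (simp add: zero_less_mult_iff)
      then show ?thesis using False by (simp add: indicator_def)
    qed
    then show ?thesis using t by simp
  qed
  also have "\<dots> = ennreal t * (ennreal (t powr a) * ennreal (Gamma (a + 1)))"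
    by (subst nn_integral_cmult) (simp_all add: gamma_nn[OF a])
  also have "\<dots> = ennreal (t powr (a + 1) * Gamma (a + 1))"
  proof -
    have g: "Gamma (a + 1) > 0" using a by simp
    show ?thesis using t g by (simp add: ennreal_mult[symmetric] powr_add mult_ac)
  qed
  finally show ?thesis .
qed


lemma rho_nn:
  fixes \<nu> x :: real
  shows "rho \<nu> x = enn2real (\<integral>\<^sup>+t. ennreal (indicator {0<..} t * (t powr (\<nu> - 1) * exp (- t - x / t))) \<partial>lborel)"
    and "rho \<nu> x \<ge> 0"
proof -
  show 1: "rho \<nu> x = enn2real (\<integral>\<^sup>+t. ennreal (indicator {0<..} t * (t powr (\<nu> - 1) * exp (- t - x / t))) \<partial>lborel)"
    unfolding rho_def set_lebesgue_integral_def
    by (subst integral_eq_nn_integral) auto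
  show "rho \<nu> x \<ge> 0" unfolding 1 by simp
qed

lemma rho_moment:
  fixes \<nu> a :: real assumes nu: "\<nu> \<ge> 0" and a: "a > -1"
  shows "has_bochner_integral lborel (\<lambda>x. indicator {0<..} x * (x powr a * rho \<nu> x))
           (Gamma (a + 1) * Gamma (\<nu> + a + 1))"
proof -
  define F where "F = (\<lambda>x t. ennreal (indicator {0<..} x * indicator {0<..} t *
       (x powr a * t powr (\<nu> - 1) * exp (- t - x / t))))"
  define J where "J = (\<lambda>x. \<integral>\<^sup>+t. ennreal (indicator {0<..} t * (t powr (\<nu> - 1) * exp (- t - x / t))) \<partial>lborel)"
  have Fm[measurable]: "case_prod F \<in> borel_measurable (lborel \<Otimes>\<^sub>M lborel)"
    unfolding F_def by measurable
  have inner_x: "(\<integral>\<^sup>+x. F x t \<partial>lborel) = ennreal (Gamma (a + 1) * (indicator {0<..} t * (t powr (\<nu> + a) * exp (- t))))" for t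
  proof (cases "t > 0")
    case True
    have "(\<integral>\<^sup>+x. F x t \<partial>lborel) = (\<integral>\<^sup>+x. ennreal (t powr (\<nu> - 1) * exp (- t)) *
            ennreal (indicator {0<..} x * (x powr a * exp (- (x / t)))) \<partial>lborel)"
    proof -
      have e: "exp (- t - x / t) = exp (- t) * exp (- (x / t))" for x
        by (simp add: exp_add[symmetric])
      show ?thesis unfolding F_def using True
        by (intro nn_integral_cong) (auto simp: ennreal_mult[symmetric] indicator_def e mult_ac)
    qed
    also have "\<dots> = ennreal (t powr (\<nu> - 1) * exp (- t)) * ennreal (t powr (a + 1) * Gamma (a + 1))"
      by (subst nn_integral_cmult) (simp_all add: scaled_nn[OF a True])
    also have "\<dots> = ennreal (Gamma (a + 1) * (indicator {0<..} t * (t powr (\<nu> + a) * exp (- t))))"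
    proof -
      have g: "Gamma (a + 1) > 0" using a by simp
      have "t powr (\<nu> - 1) * t powr (a + 1) = t powr (\<nu> + a)"
        using True by (simp add: powr_add[symmetric])
      then show ?thesis using True g
        by (simp add: ennreal_mult[symmetric] indicator_def mult_ac)
    qed
    finally show ?thesis .
  next
    case False
    then show ?thesis unfolding F_def by (simp add: indicator_def)
  qed
  have total: "(\<integral>\<^sup>+x. \<integral>\<^sup>+t. F x t \<partial>lborel \<partial>lborel) = ennreal (Gamma (a + 1) * Gamma (\<nu> + a + 1))"
  proof -
    have "(\<integral>\<^sup>+x. \<integral>\<^sup>+t. F x t \<partial>lborel \<partial>lborel) = (\<integral>\<^sup>+t. \<integral>\<^sup>+x. F x t \<partial>lborel \<partial>lborel)"
      by (rule lborel_pair.Fubini'[symmetric]) simp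
    also have "\<dots> = (\<integral>\<^sup>+t. ennreal (Gamma (a + 1)) * ennreal (indicator {0<..} t * (t powr (\<nu> + a) * exp (- t))) \<partial>lborel)"
      unfolding inner_x using a by (intro nn_integral_cong) (simp add: ennreal_mult)
    also have "\<dots> = ennreal (Gamma (a + 1)) * ennreal (Gamma (\<nu> + a + 1))"
      by (subst nn_integral_cmult) (use nu a in \<open>simp_all add: gamma_nn\<close>)
    also have "\<dots> = ennreal (Gamma (a + 1) * Gamma (\<nu> + a + 1))"
    proof -
      have "Gamma (a + 1) > 0" "Gamma (\<nu> + a + 1) > 0" using a nu by simp_all
      then show ?thesis by (simp add: ennreal_mult)
    qed
    finally show ?thesis .
  qed
  have Gm[measurable]: "(\<lambda>x. \<integral>\<^sup>+t. F x t \<partial>lborel) \<in> borel_measurable lborel"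
    by (rule lborel.borel_measurable_nn_integral) (use Fm in simp)
  have AEfin: "AE x in lborel. (\<integral>\<^sup>+t. F x t \<partial>lborel) \<noteq> \<infinity>"
    by (rule nn_integral_PInf_AE) (use total in auto)
  have Fx: "(\<integral>\<^sup>+t. F x t \<partial>lborel) = ennreal (indicator {0<..} x * x powr a) * J x" for x
    unfolding F_def J_def
    by (subst nn_integral_cmult[symmetric]) (auto intro!: nn_integral_cong simp: ennreal_mult[symmetric] indicator_def)
  have eq: "(\<integral>\<^sup>+x. ennreal (indicator {0<..} x * (x powr a * rho \<nu> x)) \<partial>lborel)
          = (\<integral>\<^sup>+x. \<integral>\<^sup>+t. F x t \<partial>lborel \<partial>lborel)"
  proof (rule nn_integral_cong_AE)
    show "AE x in lborel. ennreal (indicator {0<..} x * (x powr a * rho \<nu> x)) = (\<integral>\<^sup>+t. F x t \<partial>lborel)"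
      using AEfin
    proof (rule eventually_mono)
      fix x assume fin: "(\<integral>\<^sup>+t. F x t \<partial>lborel) \<noteq> \<infinity>"
      show "ennreal (indicator {0<..} x * (x powr a * rho \<nu> x)) = (\<integral>\<^sup>+t. F x t \<partial>lborel)"
      proof (cases "x > 0")
        case True
        have "J x \<noteq> \<infinity>" using fin True unfolding Fx by (simp add: ennreal_mult_eq_top_iff)
        moreover have "rho \<nu> x = enn2real (J x)" unfolding J_def by (rule rho_nn(1))
        ultimately have "ennreal (rho \<nu> x) = J x"
          by (simp add: less_top)
        then show ?thesis unfolding Fx using True rho_nn(2)[of \<nu> x]
          by (simp add: ennreal_mult)
      next
        case False
        then show ?thesis unfolding Fx by simp
      qed
    qed
  qed
  have Jm: "J \<in> borel_measurable lborel"
    unfolding J_def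
    by (rule lborel.borel_measurable_nn_integral) measurable
  have "rho \<nu> = (\<lambda>x. enn2real (J x))"
    by (rule ext) (simp add: J_def rho_nn(1))
  then have rm[measurable]: "rho \<nu> \<in> borel_measurable borel"
    using Jm by simp
  show ?thesis
    by (rule has_bochner_integral_nn_integral) (use eq total a nu rho_nn(2) in \<open>auto\<close>)
qed

lemma ortho_int:
  fixes \<nu> \<alpha> :: real and p q :: "real poly"
  assumes nu: "\<nu> \<ge> 0" and al: "\<alpha> > -1"
  shows "(LBINT x:{0<..}. poly p x * poly q x * x powr \<alpha> * rho \<nu> x) =
     (\<Sum>k\<le>degree p. \<Sum>j\<le>degree q. coeff p k * coeff q j *
        (Gamma (\<alpha> + real (k + j) + 1) * Gamma (\<nu> + (\<alpha> + real (k + j)) + 1)))"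
proof -
  have hb: "has_bochner_integral lborel
     (\<lambda>x. \<Sum>k\<le>degree p. \<Sum>j\<le>degree q. coeff p k * coeff q j *
         (indicator {0<..} x * (x powr (\<alpha> + real (k + j)) * rho \<nu> x)))
     (\<Sum>k\<le>degree p. \<Sum>j\<le>degree q. coeff p k * coeff q j *
        (Gamma (\<alpha> + real (k + j) + 1) * Gamma (\<nu> + (\<alpha> + real (k + j)) + 1)))"
    using nu al by (intro has_bochner_integral_sum has_bochner_integral_mult_right rho_moment) auto
  have eq: "(\<Sum>k\<le>degree p. \<Sum>j\<le>degree q. coeff p k * coeff q j *
         (indicator {0<..} x * (x powr (\<alpha> + real (k + j)) * rho \<nu> x)))
      = indicator {0<..} x *\<^sub>R (poly p x * poly q x * x powr \<alpha> * rho \<nu> x)" for x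
  proof (cases "x > 0")
    case True
    have "poly p x * poly q x * x powr \<alpha> * rho \<nu> x =
        (\<Sum>k\<le>degree p. \<Sum>j\<le>degree q. coeff p k * coeff q j * (x ^ k * x ^ j * x powr \<alpha> * rho \<nu> x))"
    proof -
      have "poly p x * poly q x = (\<Sum>k\<le>degree p. \<Sum>j\<le>degree q. coeff p k * x ^ k * (coeff q j * x ^ j))"
        unfolding poly_altdef by (rule sum_product)
      then show ?thesis
        by (simp add: sum_distrib_right) (simp add: mult_ac)
    qed
    also have "\<dots> = (\<Sum>k\<le>degree p. \<Sum>j\<le>degree q. coeff p k * coeff q j *
         (x powr (\<alpha> + real (k + j)) * rho \<nu> x))"
      using True by (intro sum.cong refl) (simp add: powr_add powr_realpow power_add mult_ac)
    finally show ?thesis using True by simp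
  next
    case False
    then show ?thesis by simp
  qed
  show ?thesis
    unfolding set_lebesgue_integral_def
    by (rule has_bochner_integral_integral_eq) (use hb eq in simp)
qed

lemma comp_int:
  fixes \<nu> \<alpha> :: real and p q :: "real poly"
  assumes nu: "\<nu> \<ge> 0" and al: "\<alpha> > -1"
  shows "(LBINT t:{0<..}. t powr \<nu> * exp (- t) * poly_theta q (poly_theta p (\<lambda>s. s powr \<alpha>)) t) =
     (\<Sum>k\<le>degree p. \<Sum>j\<le>degree q. coeff p k * coeff q j *
        (pochhammer (\<alpha> + 1) (k + j) * Gamma (\<nu> + \<alpha> + real (k + j) + 1)))"
proof -
  have s1: "poly_theta p (\<lambda>s. s powr \<alpha>) s = (\<Sum>k\<le>degree p. (coeff p k * pochhammer (\<alpha> + 1) k) * s powr (\<alpha> + real k))"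
    if s: "s > 0" for s
    using poly_theta_sum[of "{0::nat}" "\<lambda>s. s powr \<alpha>" "\<lambda>_. 1" "\<lambda>_. \<alpha>" s p] s
    by (simp add: mult_ac)
  have s2: "poly_theta q (poly_theta p (\<lambda>s. s powr \<alpha>)) t =
     (\<Sum>j\<le>degree q. coeff q j * (\<Sum>k\<le>degree p. (coeff p k * pochhammer (\<alpha> + 1) k) *
         pochhammer (\<alpha> + real k + 1) j * t powr (\<alpha> + real k + real j)))" if t: "t > 0" for t
    by (rule poly_theta_sum[OF finite_atMost s1 t])
  have hb: "has_bochner_integral lborel
     (\<lambda>t. \<Sum>k\<le>degree p. \<Sum>j\<le>degree q. coeff p k * coeff q j *
         (pochhammer (\<alpha> + 1) (k + j) * (indicator {0<..} t * (t powr (\<nu> + \<alpha> + real (k + j)) * exp (- t)))))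
     (\<Sum>k\<le>degree p. \<Sum>j\<le>degree q. coeff p k * coeff q j *
        (pochhammer (\<alpha> + 1) (k + j) * Gamma (\<nu> + \<alpha> + real (k + j) + 1)))"
    using nu al by (intro has_bochner_integral_sum has_bochner_integral_mult_right gamma_hbi) auto
  have eq: "(\<Sum>k\<le>degree p. \<Sum>j\<le>degree q. coeff p k * coeff q j *
         (pochhammer (\<alpha> + 1) (k + j) * (indicator {0<..} t * (t powr (\<nu> + \<alpha> + real (k + j)) * exp (- t)))))
      = indicator {0<..} t *\<^sub>R (t powr \<nu> * exp (- t) * poly_theta q (poly_theta p (\<lambda>s. s powr \<alpha>)) t)" for t
  proof (cases "t > 0")
    case True
    have "t powr \<nu> * exp (- t) * poly_theta q (poly_theta p (\<lambda>s. s powr \<alpha>)) t =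
       (\<Sum>j\<le>degree q. \<Sum>k\<le>degree p. coeff p k * coeff q j *
         (pochhammer (\<alpha> + 1) k * pochhammer (\<alpha> + 1 + real k) j * ((t powr \<nu> * t powr (\<alpha> + real k + real j)) * exp (- t))))"
      unfolding s2[OF True] by (simp add: sum_distrib_left) (simp add: mult_ac add_ac)
    also have "\<dots> = (\<Sum>k\<le>degree p. \<Sum>j\<le>degree q. coeff p k * coeff q j *
         (pochhammer (\<alpha> + 1) (k + j) * (t powr (\<nu> + \<alpha> + real (k + j)) * exp (- t))))"
      by (subst sum.swap) (intro sum.cong refl, simp add: pochhammer_product' powr_add[symmetric] add_ac)
    finally show ?thesis using True by simp
  next
    case False
    then show ?thesis by simp
  qed
  show ?thesis
    unfolding set_lebesgue_integral_def
    by (rule has_bochner_integral_integral_eq) (use hb eq in simp)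
qed

lemma divlem: "(g::real) > 0 \<Longrightarrow> (g * c = d) \<longleftrightarrow> (c = d / g)"
  by (auto simp: field_simps)

lemma gam_poch:
  fixes \<alpha> :: real assumes al: "\<alpha> > -1"
  shows "Gamma (\<alpha> + real i + 1) = Gamma (1 + \<alpha>) * pochhammer (\<alpha> + 1) i"
proof -
  have nz: "\<alpha> + 1 \<notin> \<int>\<^sub>\<le>\<^sub>0" using al by (auto elim!: nonpos_Ints_cases)
  have a1: "\<alpha> + 1 > 0" using al by linarith
  have gp: "Gamma (\<alpha> + 1) \<noteq> 0" using Gamma_real_pos[OF a1] by linarith
  have "pochhammer (\<alpha> + 1) i = Gamma (\<alpha> + 1 + real i) / Gamma (\<alpha> + 1)"
    by (rule pochhammer_Gamma[OF nz])
  then have "Gamma (\<alpha> + 1 + real i) = Gamma (\<alpha> + 1) * pochhammer (\<alpha> + 1) i"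
    using gp by simp
  moreover have "\<alpha> + 1 + real i = \<alpha> + real i + 1" "\<alpha> + 1 = 1 + \<alpha>" by simp_all
  ultimately show ?thesis by metis
qed

lemma key:
  fixes \<nu> \<alpha> :: real and p q :: "real poly"
  assumes nu: "\<nu> \<ge> 0" and al: "\<alpha> > -1"
  shows "(LBINT x:{0<..}. poly p x * poly q x * x powr \<alpha> * rho \<nu> x) =
     Gamma (1 + \<alpha>) * (LBINT t:{0<..}. t powr \<nu> * exp (- t) * poly_theta q (poly_theta p (\<lambda>s. s powr \<alpha>)) t)"
proof -
  have t: "coeff p k * coeff q j * (Gamma (\<alpha> + real (k + j) + 1) * Gamma (\<nu> + (\<alpha> + real (k + j)) + 1))
     = Gamma (1 + \<alpha>) * (coeff p k * coeff q j *
        (pochhammer (\<alpha> + 1) (k + j) * Gamma (\<nu> + \<alpha> + real (k + j) + 1)))" for k j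
  proof -
    have "\<nu> + (\<alpha> + real (k + j)) + 1 = \<nu> + \<alpha> + real (k + j) + 1" by (simp only: add.assoc)
    then show ?thesis unfolding gam_poch[OF al] by (simp only: mult_ac)
  qed
  show ?thesis
    unfolding ortho_int[OF nu al] comp_int[OF nu al] sum_distrib_left t ..
qed

theorem theorem1:
  fixes \<nu> \<alpha> :: real and P :: "nat \<Rightarrow> real poly"
  assumes "\<nu> \<ge> 0" and "\<alpha> > -1"
  shows "(\<forall>n m. (LBINT x:{0<..}. poly (P n) x * poly (P m) x * x powr \<alpha> * rho \<nu> x)
              = (if n = m then 1 else 0))
     \<longleftrightarrow>
         (\<forall>m n. (LBINT t:{0<..}. t powr \<nu> * exp (- t) *
                   poly_theta (P m) (poly_theta (P n) (\<lambda>s. s powr \<alpha>)) t)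
              = (if m = n then 1 else 0) / Gamma (1 + \<alpha>))"
proof -
  have a1: "1 + \<alpha> > 0" using assms by linarith
  have gp: "Gamma (1 + \<alpha>) > 0" by (rule Gamma_real_pos[OF a1])
  define A where "A = (\<lambda>n m. (LBINT x:{0<..}. poly (P n) x * poly (P m) x * x powr \<alpha> * rho \<nu> x))"
  define B where "B = (\<lambda>m n. (LBINT t:{0<..}. t powr \<nu> * exp (- t) * poly_theta (P m) (poly_theta (P n) (\<lambda>s. s powr \<alpha>)) t))"
  have k: "A n m = Gamma (1 + \<alpha>) * B m n" for n m
    unfolding A_def B_def by (rule key[OF assms])
  have e: "(A n m = (if n = m then 1 else 0)) \<longleftrightarrow> (B m n = (if m = n then 1 else 0) / Gamma (1 + \<alpha>))" for n m
  proof -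
    have i: "(if n = m then 1 else 0) = (if m = n then 1 else (0::real))" by auto
    show ?thesis
      unfolding k i by (rule divlem[OF gp])
  qed
  have "(\<forall>n m. A n m = (if n = m then 1 else 0)) \<longleftrightarrow> (\<forall>n m. B m n = (if m = n then 1 else 0) / Gamma (1 + \<alpha>))"
    by (simp only: e)
  also have "\<dots> \<longleftrightarrow> (\<forall>m n. B m n = (if m = n then 1 else 0) / Gamma (1 + \<alpha>))"
    by (rule all_comm)
  finally show ?thesis unfolding A_def B_def .
qed

end
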